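(* Let $(W,S)$ be a right-angled Coxeter system, $G$ a subgroup of $\mathrm{Aut}(W,S)$, $I\subset S$, and $\{g_i\}_{i\in I}$ a family of involutions in $G$ such that: (i) $g_i(s)\in S$ for all $i\in I$, $s\in S$; (ii) for all $i,j\in I$ with $ij=ji$, either [$g_i(j)\in I$, $g_j(i)=i$ and $g_{g_i(j)}=g_ig_jg_i$] or [$g_j(i)\in I$, $g_i(j)=j$ and $g_{g_j(i)}=g_jg_ig_j$]; (iii) $g_i(i)=i$ for all $i\in I$. Let $H$ be the subgroup of $W\rtimes G$ generated by $\{ig_i\}_{i\in I}$, and let $L$ be the group generated by symbols $l_i$, $i\in I$, subject to the relations $l_i^2=1$ for all $i\in I$, and $l_il_j=l_{g_i(j)}l_i$ whenever $ij=ji$, $g_j(i)=i$, $g_i(j)\in I$ and $g_{g_i(j)}=g_ig_jg_i$. Then the map $\varphi:L\to H$, $l_i\mapsto ig_i$, is a well-defined group isomorphism.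
   Context: A right-angled Coxeter system is a Coxeter system whose Coxeter matrix has all off-diagonal entries in $\{2,\infty\}$. $\mathrm{Aut}(W,S)$ denotes the group of automorphisms of $W$ that map $S$ bijectively onto $S$. $W\rtimes G$ is the semidirect product with multiplication $(x,\alpha)(y,\beta)=(x\alpha(y),\alpha\beta)$, and $ig_i$ denotes the element $(i,g_i)$. *)

theory Defs
  imports "HOL-Algebra.Algebra"
begin

inductive_set pres_eq :: "'a set \<Rightarrow> ('a list \<times> 'a list) set \<Rightarrow> ('a list \<times> 'a list) set"
  for Xs :: "'a set" and Rs :: "('a list \<times> 'a list) set" where
  pe_refl: "w \<in> lists Xs \<Longrightarrow> (w, w) \<in> pres_eq Xs Rs"
| pe_sym: "(u, v) \<in> pres_eq Xs Rs \<Longrightarrow> (v, u) \<in> pres_eq Xs Rs"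
| pe_trans: "(u, v) \<in> pres_eq Xs Rs \<Longrightarrow> (v, w) \<in> pres_eq Xs Rs \<Longrightarrow> (u, w) \<in> pres_eq Xs Rs"
| pe_inv: "u \<in> lists Xs \<Longrightarrow> v \<in> lists Xs \<Longrightarrow> x \<in> Xs \<Longrightarrow> (u @ [x, x] @ v, u @ v) \<in> pres_eq Xs Rs"
| pe_rel: "u \<in> lists Xs \<Longrightarrow> v \<in> lists Xs \<Longrightarrow> (a, b) \<in> Rs \<Longrightarrow> a \<in> lists Xs \<Longrightarrow> b \<in> lists Xs
           \<Longrightarrow> (u @ a @ v, u @ b @ v) \<in> pres_eq Xs Rs"

definition pres_group :: "'a set \<Rightarrow> ('a list \<times> 'a list) set \<Rightarrow> 'a list set monoid" where
  "pres_group Xs Rs =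
     \<lparr>carrier = lists Xs // pres_eq Xs Rs,
      monoid.mult = (\<lambda>A B. \<Union>a\<in>A. \<Union>b\<in>B. pres_eq Xs Rs `` {a @ b}),
      one = pres_eq Xs Rs `` {[]}\<rparr>"

definition pres_gen :: "'a set \<Rightarrow> ('a list \<times> 'a list) set \<Rightarrow> 'a \<Rightarrow> 'a list set" where
  "pres_gen Xs Rs x = pres_eq Xs Rs `` {[x]}"

text \<open>Right-angled Coxeter system with vertex set V and commutation relation E:
  W = \<open>\<langle>V | s^2 = 1, (st)^2 = 1 if E s t\<rangle>\<close> (m(s,t)=2 iff E s t, otherwise \<infinity>).\<close>

definition racg_rel :: "'v set \<Rightarrow> ('v \<Rightarrow> 'v \<Rightarrow> bool) \<Rightarrow> ('v list \<times> 'v list) set" where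
  "racg_rel V E = {([s, t], [t, s]) | s t. s \<in> V \<and> t \<in> V \<and> E s t}"

definition racg :: "'v set \<Rightarrow> ('v \<Rightarrow> 'v \<Rightarrow> bool) \<Rightarrow> 'v list set monoid" where
  "racg V E = pres_group V (racg_rel V E)"

definition racg_S :: "'v set \<Rightarrow> ('v \<Rightarrow> 'v \<Rightarrow> bool) \<Rightarrow> 'v list set set" where
  "racg_S V E = pres_gen V (racg_rel V E) ` V"

definition AutS :: "('w, 'b) monoid_scheme \<Rightarrow> 'w set \<Rightarrow> ('w \<Rightarrow> 'w) monoid" where
  "AutS W S =
     \<lparr>carrier = {h. h \<in> iso W W \<and> bij_betw h S S \<and> h \<in> extensional (carrier W)},
      monoid.mult = (\<lambda>f h. compose (carrier W) f h),
      one = restrict id (carrier W)\<rparr>"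

definition sdprod :: "('w, 'b) monoid_scheme \<Rightarrow> ('w \<Rightarrow> 'w, 'c) monoid_scheme
                      \<Rightarrow> ('w \<times> ('w \<Rightarrow> 'w)) monoid" where
  "sdprod W G =
     \<lparr>carrier = carrier W \<times> carrier G,
      monoid.mult = (\<lambda>(x, a) (y, b). (x \<otimes>\<^bsub>W\<^esub> a y, a \<otimes>\<^bsub>G\<^esub> b)),
      one = (\<one>\<^bsub>W\<^esub>, \<one>\<^bsub>G\<^esub>)\<rparr>"

definition L_rel :: "('w, 'b) monoid_scheme \<Rightarrow> ('w \<Rightarrow> 'w, 'c) monoid_scheme \<Rightarrow> 'w set
                     \<Rightarrow> ('w \<Rightarrow> ('w \<Rightarrow> 'w)) \<Rightarrow> ('w list \<times> 'w list) set" where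
  "L_rel W G I g = {([i, j], [g i j, i]) | i j. i \<in> I \<and> j \<in> I \<and> i \<otimes>\<^bsub>W\<^esub> j = j \<otimes>\<^bsub>W\<^esub> i \<and>
                  g j i = i \<and> g i j \<in> I \<and> g (g i j) = g i \<otimes>\<^bsub>G\<^esub> g j \<otimes>\<^bsub>G\<^esub> g i}"

definition H_grp :: "('w, 'b) monoid_scheme \<Rightarrow> ('w \<Rightarrow> 'w, 'c) monoid_scheme \<Rightarrow> 'w set
                     \<Rightarrow> ('w \<Rightarrow> ('w \<Rightarrow> 'w)) \<Rightarrow> ('w \<times> ('w \<Rightarrow> 'w)) monoid" where
  "H_grp W G I g = (sdprod W G)\<lparr>carrier := generate (sdprod W G) {(i, g i) | i. i \<in> I}\<rparr>"

end

theory Submission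
  imports Defs
begin



inductive cancels :: "('a \<Rightarrow> 'a \<Rightarrow> bool) \<Rightarrow> 'a list \<Rightarrow> 'a list \<Rightarrow> bool" for C where
  cI: "(\<forall>c\<in>set m. C a c) \<Longrightarrow> cancels C (u @ a # m @ a # v) (u @ m @ v)"

inductive swp :: "('a \<Rightarrow> 'a \<Rightarrow> bool) \<Rightarrow> 'a list \<Rightarrow> 'a list \<Rightarrow> bool" for C where
  sI: "C s t \<Longrightarrow> swp C (u @ s # t # v) (u @ t # s # v)"

definition stp where "stp C x y = (swp C x y \<or> cancels C x y)"

definition Pr where "Pr C w = (stp C)\<^sup>*\<^sup>* w []"

lemma move:
  assumes "\<forall>c\<in>set m. C a c"
  shows "(swp C)\<^sup>*\<^sup>* (x @ a # m @ y) (x @ m @ a # y)"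
  using assms
proof (induction m arbitrary: x)
  case Nil then show ?case by simp
next
  case (Cons c m)
  have "swp C (x @ a # c # m @ y) ((x @ [c]) @ a # m @ y)"
    using swp.sI[of C a c x "m @ y"] Cons.prems by simp
  moreover have "(swp C)\<^sup>*\<^sup>* ((x @ [c]) @ a # m @ y) ((x @ [c]) @ m @ a # y)"
    using Cons.IH[of "x @ [c]"] Cons.prems by simp
  ultimately show ?case by (simp add: converse_rtranclp_into_rtranclp)
qed

lemma swp_sym: assumes "\<And>x y. C x y \<Longrightarrow> C y x" "swp C x y" shows "swp C y x"
  using assms(2) by (induction rule: swp.induct) (auto intro: swp.sI assms(1))

lemma swps_sym: assumes "\<And>x y. C x y \<Longrightarrow> C y x" "(swp C)\<^sup>*\<^sup>* x y" shows "(swp C)\<^sup>*\<^sup>* y x"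
  using assms(2) by (induction rule: rtranclp_induct) (auto intro: converse_rtranclp_into_rtranclp swp_sym assms(1))


lemma split_app: "xs @ ys = zs @ ts \<Longrightarrow> length xs \<le> length zs \<Longrightarrow> \<exists>r. zs = xs @ r \<and> ys = r @ ts"
  by (metis append_eq_append_conv_if append_take_drop_id)

lemma split2: "xs @ ys = zs @ ts \<Longrightarrow> (\<exists>us. xs = zs @ us \<and> us @ ys = ts) \<or> (\<exists>us. xs @ us = zs \<and> ys = us @ ts)"
  by (subst (asm) append_eq_append_conv2) blast

lemma cI': assumes "\<forall>c\<in>set m. C a c" "w = u @ a # m @ a # v" "w' = u @ m @ v" shows "cancels C w w'"
  using cancels.cI[where C=C and m=m and a=a and u=u and v=v, OF assms(1)] assms(2,3) by simp

lemma move': assumes "\<forall>c\<in>set m. C a c" "w = x @ a # m @ y" "w' = x @ m @ a # y" shows "(swp C)\<^sup>*\<^sup>* w w'"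
  using move[where C=C and m=m and a=a and x=x and y=y, OF assms(1)] assms(2,3) by simp

lemma conf_aux:
  assumes symC: "\<And>x y. C x y \<Longrightarrow> C y x"
    and e: "u1 @ a # m1 @ a # v1 = u2 @ b # m2 @ b # v2"
    and ca: "\<forall>c\<in>set m1. C a c" and cb: "\<forall>c\<in>set m2. C b c"
    and len: "length u1 \<le> length u2"
  shows "(swp C)\<^sup>*\<^sup>* (u1 @ m1 @ v1) (u2 @ m2 @ v2) \<or> (swp C)\<^sup>*\<^sup>* (u2 @ m2 @ v2) (u1 @ m1 @ v1) \<or>
         (\<exists>w3. cancels C (u1 @ m1 @ v1) w3 \<and> cancels C (u2 @ m2 @ v2) w3)"
proof -
  obtain r where u2: "u2 = u1 @ r" and e1: "a # m1 @ a # v1 = r @ b # m2 @ b # v2"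
    using split_app[OF e len] by blast
  show ?thesis
  proof (cases r)
    case Nil
    with e1 have ab: "b = a" and e2: "m1 @ a # v1 = m2 @ a # v2" by auto
    from e2 obtain us where "(m1 = m2 @ us \<and> us @ a # v1 = a # v2) \<or> (m1 @ us = m2 \<and> a # v1 = us @ a # v2)"
      using split2 by blast
    then show ?thesis
    proof
      assume h: "m1 = m2 @ us \<and> us @ a # v1 = a # v2"
      show ?thesis
      proof (cases us)
        case Nil then show ?thesis using h u2 \<open>r = []\<close> by simp
      next
        case (Cons x us')
        then have "m1 = m2 @ a # us'" "v2 = us' @ a # v1" using h by auto
        then have "(swp C)\<^sup>*\<^sup>* (u1 @ m1 @ v1) (u2 @ m2 @ v2)"
          using ca u2 \<open>r = []\<close> by (intro move'[of us' C a _ "u1 @ m2" v1]) auto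
        then show ?thesis by blast
      qed
    next
      assume h: "m1 @ us = m2 \<and> a # v1 = us @ a # v2"
      show ?thesis
      proof (cases us)
        case Nil then show ?thesis using h u2 \<open>r = []\<close> by simp
      next
        case (Cons x us')
        then have "m2 = m1 @ a # us'" "v1 = us' @ a # v2" using h by auto
        then have "(swp C)\<^sup>*\<^sup>* (u2 @ m2 @ v2) (u1 @ m1 @ v1)"
          using cb ab u2 \<open>r = []\<close> by (intro move'[of us' C a _ "u1 @ m1" v2]) auto
        then show ?thesis by blast
      qed
    qed
  next
    case (Cons x r')
    with e1 have xa: "x = a" and e2: "m1 @ a # v1 = r' @ b # m2 @ b # v2" by auto
    from e2 obtain us where "(m1 = r' @ us \<and> us @ a # v1 = b # m2 @ b # v2) \<or> (m1 @ us = r' \<and> a # v1 = us @ b # m2 @ b # v2)"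
      using split2 by blast
    then show ?thesis
    proof
      assume h: "m1 = r' @ us \<and> us @ a # v1 = b # m2 @ b # v2"
      show ?thesis
      proof (cases us)
        case Nil
        then have "b = a" "v1 = m2 @ a # v2" "m1 = r'" using h by auto
        then have "(swp C)\<^sup>*\<^sup>* (u2 @ m2 @ v2) (u1 @ m1 @ v1)"
          using ca cb u2 Cons xa by (intro move'[of "r' @ m2" C a _ u1 v2]) auto
        then show ?thesis by blast
      next
        case (Cons y us')
        then have yb: "y = b" and m1: "m1 = r' @ b # us'" and e3: "us' @ a # v1 = m2 @ b # v2" using h by auto
        from e3 obtain t where "(us' = m2 @ t \<and> t @ a # v1 = b # v2) \<or> (us' @ t = m2 \<and> a # v1 = t @ b # v2)"
          using split2 by blast
        then show ?thesis
        proof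
          assume h2: "us' = m2 @ t \<and> t @ a # v1 = b # v2"
          show ?thesis
          proof (cases t)
            case Nil
            then have "b = a" "v1 = v2" using h2 by auto
            then have "(swp C)\<^sup>*\<^sup>* (u2 @ m2 @ v2) (u1 @ m1 @ v1)"
              using ca m1 h2 Nil u2 \<open>r = x # r'\<close> xa by (intro move'[of r' C a _ u1 "m2 @ v2"]) auto
            then show ?thesis by blast
          next
            case (Cons z t')
            then have us': "us' = m2 @ b # t'" and v2: "v2 = t' @ a # v1" using h2 by auto
            have "cancels C (u1 @ m1 @ v1) (u1 @ r' @ m2 @ t' @ v1)"
              using cb m1 us' by (intro cI'[of m2 C b _ "u1 @ r'" "t' @ v1"]) auto
            moreover have "cancels C (u2 @ m2 @ v2) (u1 @ r' @ m2 @ t' @ v1)"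
              using ca m1 us' u2 v2 \<open>r = x # r'\<close> xa by (intro cI'[of "r' @ m2 @ t'" C a _ u1 v1]) auto
            ultimately show ?thesis by blast
          qed
        next
          assume h2: "us' @ t = m2 \<and> a # v1 = t @ b # v2"
          show ?thesis
          proof (cases t)
            case Nil
            then have "b = a" "v1 = v2" "us' = m2" using h2 by auto
            then have "(swp C)\<^sup>*\<^sup>* (u2 @ m2 @ v2) (u1 @ m1 @ v1)"
              using ca m1 u2 \<open>r = x # r'\<close> xa by (intro move'[of r' C a _ u1 "m2 @ v2"]) auto
            then show ?thesis by blast
          next
            case (Cons z t')
            then have m2: "m2 = us' @ a # t'" and v1: "v1 = t' @ b # v2" using h2 by auto
            have "cancels C (u1 @ m1 @ v1) (u1 @ r' @ us' @ t' @ v2)"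
              using cb m1 m2 v1 by (intro cI'[of "us' @ t'" C b _ "u1 @ r'" v2]) auto
            moreover have "cancels C (u2 @ m2 @ v2) (u1 @ r' @ us' @ t' @ v2)"
              using ca m1 m2 u2 \<open>r = x # r'\<close> xa by (intro cI'[of "r' @ us'" C a _ u1 "t' @ v2"]) auto
            ultimately show ?thesis by blast
          qed
        qed
      qed
    next
      assume h: "m1 @ us = r' \<and> a # v1 = us @ b # m2 @ b # v2"
      show ?thesis
      proof (cases us)
        case Nil
        then have "b = a" "v1 = m2 @ a # v2" "r' = m1" using h by auto
        then have "(swp C)\<^sup>*\<^sup>* (u2 @ m2 @ v2) (u1 @ m1 @ v1)"
          using ca cb u2 Cons xa by (intro move'[of "m1 @ m2" C a _ u1 v2]) auto
        then show ?thesis by blast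
      next
        case (Cons y us')
        then have r': "r' = m1 @ a # us'" and v1: "v1 = us' @ b # m2 @ b # v2" using h by auto
        have "cancels C (u1 @ m1 @ v1) (u1 @ m1 @ us' @ m2 @ v2)"
          using cb v1 by (intro cI'[of m2 C b _ "u1 @ m1 @ us'" v2]) auto
        moreover have "cancels C (u2 @ m2 @ v2) (u1 @ m1 @ us' @ m2 @ v2)"
          using ca r' u2 \<open>r = x # r'\<close> xa by (intro cI'[of m1 C a _ u1 "us' @ m2 @ v2"]) auto
        ultimately show ?thesis by blast
      qed
    qed
  qed
qed


lemma conf:
  assumes symC: "\<And>x y. C x y \<Longrightarrow> C y x" and c1: "cancels C w w1" and c2: "cancels C w w2"
  shows "(swp C)\<^sup>*\<^sup>* w1 w2 \<or> (swp C)\<^sup>*\<^sup>* w2 w1 \<or> (\<exists>w3. cancels C w1 w3 \<and> cancels C w2 w3)"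
proof -
  from c1 obtain u1 a m1 v1 where w: "w = u1 @ a # m1 @ a # v1" and w1: "w1 = u1 @ m1 @ v1" and ca: "\<forall>c\<in>set m1. C a c"
    by (auto elim: cancels.cases)
  from c2 obtain u2 b m2 v2 where w': "w = u2 @ b # m2 @ b # v2" and w2: "w2 = u2 @ m2 @ v2" and cb: "\<forall>c\<in>set m2. C b c"
    by (auto elim: cancels.cases)
  show ?thesis
  proof (cases "length u1 \<le> length u2")
    case True
    then show ?thesis using conf_aux[of C u1 a m1 v1 u2 b m2 v2, OF symC] w w' w1 w2 ca cb by auto
  next
    case False
    then show ?thesis using conf_aux[of C u2 b m2 v2 u1 a m1 v1, OF symC] w w' w1 w2 ca cb by auto
  qed
qed

lemma swstep:
  assumes symC: "\<And>x y. C x y \<Longrightarrow> C y x" and s1: "swp C w w'" and c1: "cancels C w w1"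
  shows "\<exists>w1'. cancels C w' w1' \<and> (w1' = w1 \<or> swp C w1 w1')"
proof -
  from s1 obtain x s t y where w: "w = x @ s # t # y" and w': "w' = x @ t # s # y" and st: "C s t"
    by (auto elim: swp.cases)
  from c1 obtain u a m v where wu: "w = u @ a # m @ a # v" and w1: "w1 = u @ m @ v" and ca: "\<forall>c\<in>set m. C a c"
    by (auto elim: cancels.cases)
  have e: "x @ (s # t # y) = u @ (a # m @ a # v)" using w wu by simp
  have case0: ?thesis if "x = u" "s = a" "t # y = m @ a # v"
  proof (cases m)
    case Nil
    then have "w' = w" using that w w' wu by simp
    then show ?thesis using c1 by auto
  next
    case (Cons c m')
    then have "cancels C w' w1" using that w' w1 ca by (intro cI'[of m' C a _ "u @ [c]" v]) auto
    then show ?thesis by auto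
  qed
  from split2[OF e] show ?thesis
  proof
    assume "\<exists>us. x = u @ us \<and> us @ s # t # y = a # m @ a # v"
    then obtain us where h: "x = u @ us" "us @ s # t # y = a # m @ a # v" by blast
    show ?thesis
    proof (cases us)
      case Nil then show ?thesis using h case0 by simp
    next
      case (Cons z x')
      then have x: "x = u @ a # x'" and e2: "x' @ (s # t # y) = m @ (a # v)" using h by auto
      from split2[OF e2] show ?thesis
      proof
        assume "\<exists>us. x' = m @ us \<and> us @ s # t # y = a # v"
        then obtain t' where h2: "x' = m @ t'" "t' @ s # t # y = a # v" by blast
        show ?thesis
        proof (cases t')
          case Nil
          then have "s = a" "v = t # y" using h2 by auto
          then have "cancels C w' w1" using h2 Nil x w' w1 ca st
            by (intro cI'[of "m @ [t]" C a _ u y]) auto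
          then show ?thesis by auto
        next
          case (Cons z2 t'')
          then have v: "v = t'' @ s # t # y" using h2 by auto
          have "cancels C w' (u @ m @ t'' @ t # s # y)" using h2 Cons x w' ca
            by (intro cI'[of m C a _ u "t'' @ t # s # y"]) auto
          moreover have "swp C w1 (u @ m @ t'' @ t # s # y)"
            using swp.sI[of C s t "u @ m @ t''" y] st w1 v by simp
          ultimately show ?thesis by blast
        qed
      next
        assume "\<exists>us. x' @ us = m \<and> s # t # y = us @ a # v"
        then obtain t' where h2: "x' @ t' = m" "s # t # y = t' @ a # v" by blast
        show ?thesis
        proof (cases t')
          case Nil
          then have "s = a" "v = t # y" "x' = m" using h2 by auto
          then have "cancels C w' w1" using x w' w1 ca st
            by (intro cI'[of "m @ [t]" C a _ u y]) auto
          then show ?thesis by auto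
        next
          case (Cons z2 t'')
          then have zs: "z2 = s" and e3: "t # y = t'' @ a # v" using h2 by auto
          show ?thesis
          proof (cases t'')
            case Nil
            then have "t = a" "y = v" "m = x' @ [s]" using e3 h2 Cons zs by auto
            then have "cancels C w' w1" using x w' w1 ca
              by (intro cI'[of x' C a _ u "s # v"]) auto
            then show ?thesis by auto
          next
            case (Cons z3 t3)
            then have y: "y = t3 @ a # v" and m: "m = x' @ s # t # t3" using e3 h2 \<open>t' = z2 # t''\<close> zs by auto
            have "cancels C w' (u @ x' @ t # s # t3 @ v)" using x w' y m ca
              by (intro cI'[of "x' @ t # s # t3" C a _ u v]) auto
            moreover have "swp C w1 (u @ x' @ t # s # t3 @ v)"
              using swp.sI[of C s t "u @ x'" "t3 @ v"] st w1 m by simp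
            ultimately show ?thesis by blast
          qed
        qed
      qed
    qed
  next
    assume "\<exists>us. x @ us = u \<and> s # t # y = us @ a # m @ a # v"
    then obtain us where h: "x @ us = u" "s # t # y = us @ a # m @ a # v" by blast
    show ?thesis
    proof (cases us)
      case Nil then show ?thesis using h case0 by simp
    next
      case (Cons z us')
      then have zs: "z = s" and e2: "t # y = us' @ a # m @ a # v" using h by auto
      show ?thesis
      proof (cases us')
        case Nil
        then have "t = a" "y = m @ a # v" "u = x @ [s]" using e2 h Cons zs by auto
        then have "cancels C w' w1" using w' w1 ca st symC
          by (intro cI'[of "s # m" C a _ x v]) auto
        then show ?thesis by auto
      next
        case (Cons z2 us'')
        then have y: "y = us'' @ a # m @ a # v" and u: "u = x @ s # t # us''" using e2 h \<open>us = z # us'\<close> zs by auto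
        have "cancels C w' (x @ t # s # us'' @ m @ v)" using w' y ca
          by (intro cI'[of m C a _ "x @ t # s # us''" v]) auto
        moreover have "swp C w1 (x @ t # s # us'' @ m @ v)"
          using swp.sI[of C s t x "us'' @ m @ v"] st w1 u by simp
        ultimately show ?thesis by blast
      qed
    qed
  qed
qed

lemma swps_stps: "(swp C)\<^sup>*\<^sup>* x y \<Longrightarrow> (stp C)\<^sup>*\<^sup>* x y"
  by (induction rule: rtranclp_induct) (auto simp: stp_def intro: rtranclp.rtrancl_into_rtrancl)

lemma Pr_cancel:
  assumes symC: "\<And>x y. C x y \<Longrightarrow> C y x" and P: "(stp C)\<^sup>*\<^sup>* w []"
  shows "cancels C w w' \<Longrightarrow> (stp C)\<^sup>*\<^sup>* w' []"
  using P
proof (induction arbitrary: w' rule: converse_rtranclp_induct)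
  case base
  then show ?case by (auto elim: cancels.cases)
next
  case (step w w1)
  have "swp C w w1 \<or> cancels C w w1" using step.hyps(1) by (simp add: stp_def)
  then show ?case
  proof
    assume sw: "swp C w w1"
    from swstep[of C, OF symC sw step.prems] obtain w1' where "cancels C w1 w1'" "w1' = w' \<or> swp C w' w1'" by blast
    with step.IH show ?thesis
      by (auto simp: stp_def intro: converse_rtranclp_into_rtranclp)
  next
    assume cw: "cancels C w w1"
    have "(swp C)\<^sup>*\<^sup>* w1 w' \<or> (swp C)\<^sup>*\<^sup>* w' w1 \<or> (\<exists>w3. cancels C w1 w3 \<and> cancels C w' w3)"
    proof (rule conf[of C w w1 w'])
      show "\<And>x y. C x y \<Longrightarrow> C y x" by (rule symC)
    qed (fact cw, fact step.prems)
    then show ?thesis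
    proof (elim disjE exE conjE)
      assume "(swp C)\<^sup>*\<^sup>* w1 w'"
      then have "(swp C)\<^sup>*\<^sup>* w' w1" using swps_sym[of C] symC by blast
      then show ?thesis using step.hyps(2) by (meson rtranclp_trans swps_stps)
    next
      assume "(swp C)\<^sup>*\<^sup>* w' w1"
      then show ?thesis using step.hyps(2) by (meson rtranclp_trans swps_stps)
    next
      fix w3 assume "cancels C w1 w3" "cancels C w' w3"
      then show ?thesis using step.IH by (auto simp: stp_def intro: converse_rtranclp_into_rtranclp)
    qed
  qed
qed




definition Cv :: "('v \<Rightarrow> 'v \<Rightarrow> bool) \<Rightarrow> 'v \<Rightarrow> 'v \<Rightarrow> bool" where
  "Cv E x y = (x = y \<or> E x y \<or> E y x)"

lemma Cv_sym: "Cv E x y \<Longrightarrow> Cv E y x" by (auto simp: Cv_def)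

lemma racg_Pr:
  assumes "(u, v) \<in> pres_eq V (racg_rel V E)"
  shows "Pr (Cv E) u \<longleftrightarrow> Pr (Cv E) v"
  using assms
proof (induction rule: pres_eq.induct)
  case (pe_inv u v x)
  have c: "cancels (Cv E) (u @ [x, x] @ v) (u @ v)"
    using cancels.cI[of "[]" "Cv E" x u v] by simp
  show ?case
  proof
    assume "Pr (Cv E) (u @ [x, x] @ v)"
    then show "Pr (Cv E) (u @ v)" unfolding Pr_def using Pr_cancel[of "Cv E", OF Cv_sym] c by blast
  next
    assume "Pr (Cv E) (u @ v)"
    then show "Pr (Cv E) (u @ [x, x] @ v)" unfolding Pr_def using c
      by (auto simp: stp_def intro: converse_rtranclp_into_rtranclp)
  qed
next
  case (pe_rel u v a b)
  then obtain s t where ab: "a = [s, t]" "b = [t, s]" "E s t" by (auto simp: racg_rel_def)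
  have 1: "swp (Cv E) (u @ a @ v) (u @ b @ v)" using swp.sI[of "Cv E" s t u v] ab by (simp add: Cv_def)
  have 2: "swp (Cv E) (u @ b @ v) (u @ a @ v)" using swp.sI[of "Cv E" t s u v] ab by (simp add: Cv_def)
  show ?case unfolding Pr_def using 1 2
    by (auto simp: stp_def intro: converse_rtranclp_into_rtranclp)
qed auto

lemma pe_lists: "(u, v) \<in> pres_eq Xs Rs \<Longrightarrow> u \<in> lists Xs \<and> v \<in> lists Xs"
  by (induction rule: pres_eq.induct) auto

lemma pe_equiv: "equiv (lists Xs) (pres_eq Xs Rs)"
proof (rule equivI)
  show "pres_eq Xs Rs \<subseteq> lists Xs \<times> lists Xs" using pe_lists by fast
  show "refl_on (lists Xs) (pres_eq Xs Rs)" by (rule refl_onI) (rule pe_refl)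
  show "sym (pres_eq Xs Rs)" by (rule symI) (rule pe_sym)
  show "trans (pres_eq Xs Rs)" by (rule transI) (rule pe_trans)
qed

lemma pe_cong:
  assumes "(x, y) \<in> pres_eq Xs Rs" "u \<in> lists Xs" "v \<in> lists Xs"
  shows "(u @ x @ v, u @ y @ v) \<in> pres_eq Xs Rs"
  using assms
proof (induction rule: pres_eq.induct)
  case (pe_refl w) then show ?case by (intro pres_eq.pe_refl) auto
next
  case (pe_sym a b) then show ?case by (auto intro: pres_eq.pe_sym)
next
  case (pe_trans a b c) then show ?case by (auto intro: pres_eq.pe_trans)
next
  case (pe_inv a b z)
  then show ?case using pres_eq.pe_inv[of "u @ a" Xs "b @ v" z Rs] by simp
next
  case (pe_rel a b p q)
  then show ?case using pres_eq.pe_rel[of "u @ a" Xs "b @ v" p q Rs] by simp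
qed

definition cls :: "'a set \<Rightarrow> ('a list \<times> 'a list) set \<Rightarrow> 'a list \<Rightarrow> 'a list set" where
  "cls Xs Rs u = pres_eq Xs Rs `` {u}"

lemma cls_eq: "u \<in> lists Xs \<Longrightarrow> v \<in> lists Xs \<Longrightarrow> cls Xs Rs u = cls Xs Rs v \<longleftrightarrow> (u, v) \<in> pres_eq Xs Rs"
  unfolding cls_def by (rule eq_equiv_class_iff[OF pe_equiv])

lemma cls_self: "u \<in> lists Xs \<Longrightarrow> u \<in> cls Xs Rs u"
  unfolding cls_def by (rule equiv_class_self[OF pe_equiv])

lemma in_cls: "w \<in> cls Xs Rs u \<longleftrightarrow> (u, w) \<in> pres_eq Xs Rs"
  unfolding cls_def by simp

lemma carrier_pg: "x \<in> carrier (pres_group Xs Rs) \<longleftrightarrow> (\<exists>u\<in>lists Xs. x = cls Xs Rs u)"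
  unfolding pres_group_def cls_def by (auto simp: quotient_def)

lemma mult_pg: 
  assumes "u \<in> lists Xs" "v \<in> lists Xs"
  shows "cls Xs Rs u \<otimes>\<^bsub>pres_group Xs Rs\<^esub> cls Xs Rs v = cls Xs Rs (u @ v)"
proof -
  have "\<And>a b. a \<in> cls Xs Rs u \<Longrightarrow> b \<in> cls Xs Rs v \<Longrightarrow> pres_eq Xs Rs `` {a @ b} = cls Xs Rs (u @ v)"
  proof -
    fix a b assume a: "a \<in> cls Xs Rs u" and b: "b \<in> cls Xs Rs v"
    then have ua: "(u, a) \<in> pres_eq Xs Rs" and vb: "(v, b) \<in> pres_eq Xs Rs" by (auto simp: in_cls)
    have al: "a \<in> lists Xs" "b \<in> lists Xs" using pe_lists[OF ua] pe_lists[OF vb] by auto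
    have "(u @ v, a @ v) \<in> pres_eq Xs Rs" using pe_cong[OF ua, of "[]" v] assms by simp
    moreover have "(a @ v, a @ b) \<in> pres_eq Xs Rs" using pe_cong[OF vb, of a "[]"] al by simp
    ultimately have "(u @ v, a @ b) \<in> pres_eq Xs Rs" by (rule pe_trans)
    then show "pres_eq Xs Rs `` {a @ b} = cls Xs Rs (u @ v)"
      unfolding cls_def using pe_equiv equiv_class_eq_iff by (metis pe_sym)
  qed
  moreover have "u \<in> cls Xs Rs u" "v \<in> cls Xs Rs v" using cls_self[OF assms(1)] cls_self[OF assms(2)] by auto
  ultimately show ?thesis unfolding pres_group_def by auto
qed

lemma one_pg: "\<one>\<^bsub>pres_group Xs Rs\<^esub> = cls Xs Rs []"
  by (simp add: pres_group_def cls_def)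

lemma rev_pe: "u \<in> lists Xs \<Longrightarrow> (u @ rev u, []) \<in> pres_eq Xs Rs \<and> (rev u @ u, []) \<in> pres_eq Xs Rs"
proof (induction u rule: rev_induct)
  case Nil then show ?case by (auto intro: pe_refl)
next
  case (snoc x xs)
  then have xs: "xs \<in> lists Xs" "x \<in> Xs" by auto
  have rl: "rev xs \<in> lists Xs" using xs by (metis set_rev in_lists_conv_set)
  have 1: "((xs @ [x]) @ rev (xs @ [x]), xs @ rev xs) \<in> pres_eq Xs Rs"
    using pe_inv[OF xs(1) rl xs(2), of Rs] by simp
  have 2: "(rev (xs @ [x]) @ (xs @ [x]), [x, x]) \<in> pres_eq Xs Rs"
    using pe_cong[of "rev xs @ xs" "[]" Xs Rs "[x]" "[x]"] snoc xs by simp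
  have 3: "([x, x], []) \<in> pres_eq Xs Rs" using pe_inv[of "[]" Xs "[]" x Rs] xs by simp
  show ?case using 1 2 3 snoc xs by (meson pe_trans)
qed

lemma group_pg: "group (pres_group Xs Rs)"
proof (rule groupI)
  fix x y assume "x \<in> carrier (pres_group Xs Rs)" "y \<in> carrier (pres_group Xs Rs)"
  then obtain u v where uv: "u \<in> lists Xs" "v \<in> lists Xs" "x = cls Xs Rs u" "y = cls Xs Rs v" by (auto simp: carrier_pg)
  then have "u @ v \<in> lists Xs" by simp
  then show "x \<otimes>\<^bsub>pres_group Xs Rs\<^esub> y \<in> carrier (pres_group Xs Rs)" unfolding carrier_pg
    using uv mult_pg[OF uv(1,2)] by blast
next
  show "\<one>\<^bsub>pres_group Xs Rs\<^esub> \<in> carrier (pres_group Xs Rs)" by (auto simp: one_pg carrier_pg)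
next
  fix x y z assume "x \<in> carrier (pres_group Xs Rs)" "y \<in> carrier (pres_group Xs Rs)" "z \<in> carrier (pres_group Xs Rs)"
  then obtain u v w where "u \<in> lists Xs" "v \<in> lists Xs" "w \<in> lists Xs" "x = cls Xs Rs u" "y = cls Xs Rs v" "z = cls Xs Rs w"
    by (auto simp: carrier_pg)
  then show "x \<otimes>\<^bsub>pres_group Xs Rs\<^esub> y \<otimes>\<^bsub>pres_group Xs Rs\<^esub> z = x \<otimes>\<^bsub>pres_group Xs Rs\<^esub> (y \<otimes>\<^bsub>pres_group Xs Rs\<^esub> z)"
    by (simp add: mult_pg)
next
  fix x assume "x \<in> carrier (pres_group Xs Rs)"
  then obtain u where "u \<in> lists Xs" "x = cls Xs Rs u" by (auto simp: carrier_pg)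
  then show "\<one>\<^bsub>pres_group Xs Rs\<^esub> \<otimes>\<^bsub>pres_group Xs Rs\<^esub> x = x" by (simp add: one_pg mult_pg)
next
  fix x assume "x \<in> carrier (pres_group Xs Rs)"
  then obtain u where u: "u \<in> lists Xs" "x = cls Xs Rs u" by (auto simp: carrier_pg)
  have ru: "rev u \<in> lists Xs" using u(1) by (metis set_rev in_lists_conv_set)
  have "cls Xs Rs (rev u) \<otimes>\<^bsub>pres_group Xs Rs\<^esub> x = \<one>\<^bsub>pres_group Xs Rs\<^esub>"
    using rev_pe[OF u(1), of Rs] u mult_pg[OF ru u(1), of Rs] cls_eq[of "rev u @ u" Xs "[]" Rs] ru
    by (simp add: one_pg)
  moreover have "cls Xs Rs (rev u) \<in> carrier (pres_group Xs Rs)" using u by (auto simp: carrier_pg)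
  ultimately show "\<exists>y\<in>carrier (pres_group Xs Rs). y \<otimes>\<^bsub>pres_group Xs Rs\<^esub> x = \<one>\<^bsub>pres_group Xs Rs\<^esub>" by blast
qed




primrec sig where
  "sig GG g h [] = []"
| "sig GG g h (i # w) = h i # sig GG g (h \<otimes>\<^bsub>GG\<^esub> g i) w"

definition Phi where
  "Phi W GG g w = foldr (\<lambda>i acc. (i, g i) \<otimes>\<^bsub>sdprod W GG\<^esub> acc) w \<one>\<^bsub>sdprod W GG\<^esub>"

definition prodW where
  "prodW W xs = foldr (\<lambda>x acc. x \<otimes>\<^bsub>W\<^esub> acc) xs \<one>\<^bsub>W\<^esub>"

primrec hp where
  "hp GG g h [] = h"
| "hp GG g h (i # w) = hp GG g (h \<otimes>\<^bsub>GG\<^esub> g i) w"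

lemma sig_append: "sig GG g h (u @ v) = sig GG g h u @ sig GG g (hp GG g h u) v"
  by (induction u arbitrary: h) auto

lemma length_sig [simp]: "length (sig GG g h w) = length w"
  by (induction w arbitrary: h) auto

lemma stp_map:
  assumes "\<And>x y. C x y \<Longrightarrow> C' (f x) (f y)" "stp C u v"
  shows "stp C' (map f u) (map f v)"
  using assms(2) unfolding stp_def
proof
  assume "swp C u v" then show "swp C' (map f u) (map f v) \<or> cancels C' (map f u) (map f v)"
  proof (induction rule: swp.induct)
    case (sI s t u v)
    then have "swp C' (map f u @ f s # f t # map f v) (map f u @ f t # f s # map f v)"
      by (intro swp.sI assms(1))
    then show ?case by simp
  qed
next
  assume "cancels C u v" then show "swp C' (map f u) (map f v) \<or> cancels C' (map f u) (map f v)"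
  proof (induction rule: cancels.induct)
    case (cI m a u v)
    then have "cancels C' (map f u @ f a # map f m @ f a # map f v) (map f u @ map f m @ map f v)"
      by (intro cancels.cI) (auto intro: assms(1))
    then show ?case by simp
  qed
qed

lemma Pr_map:
  assumes "\<And>x y. C x y \<Longrightarrow> C' (f x) (f y)" "Pr C u"
  shows "Pr C' (map f u)"
proof -
  have "(stp C)\<^sup>*\<^sup>* u []" using assms(2) by (simp add: Pr_def)
  then have "(stp C')\<^sup>*\<^sup>* (map f u) (map f [])"
    by (induction rule: rtranclp_induct) (auto intro: rtranclp.rtrancl_into_rtrancl stp_map assms(1))
  then show ?thesis by (simp add: Pr_def)
qed

locale L1 =
  fixes V :: "'v set" and E :: "'v \<Rightarrow> 'v \<Rightarrow> bool"
    and Gs :: "('v list set \<Rightarrow> 'v list set) set"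
    and I :: "'v list set set"
    and g :: "'v list set \<Rightarrow> ('v list set \<Rightarrow> 'v list set)"
    and W S GG
  assumes W_def: "W = racg V E"
    and S_def: "S = racg_S V E"
    and GG_def: "GG = (AutS (racg V E) (racg_S V E))\<lparr>carrier := Gs\<rparr>"
  assumes G_sub: "subgroup Gs (AutS W S)"
    and I_sub: "I \<subseteq> S"
    and g_in: "\<forall>i\<in>I. g i \<in> Gs"
    and g_invol: "\<forall>i\<in>I. g i \<otimes>\<^bsub>GG\<^esub> g i = \<one>\<^bsub>GG\<^esub> \<and> g i \<noteq> \<one>\<^bsub>GG\<^esub>"
    and cond_ii: "\<forall>i\<in>I. \<forall>j\<in>I. i \<otimes>\<^bsub>W\<^esub> j = j \<otimes>\<^bsub>W\<^esub> i \<longrightarrow>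
        (g i j \<in> I \<and> g j i = i \<and> g (g i j) = g i \<otimes>\<^bsub>GG\<^esub> g j \<otimes>\<^bsub>GG\<^esub> g i) \<or>
        (g j i \<in> I \<and> g i j = j \<and> g (g j i) = g j \<otimes>\<^bsub>GG\<^esub> g i \<otimes>\<^bsub>GG\<^esub> g j)"
    and cond_iii: "\<forall>i\<in>I. g i i = i"
begin

abbreviation "Rw \<equiv> racg_rel V E"
abbreviation "cw \<equiv> cls V Rw"

lemma W_eq: "W = pres_group V Rw" by (simp add: W_def racg_def)

lemma grpW: "group W" by (simp add: W_eq group_pg)

lemma S_eq: "S = (\<lambda>v. cw [v]) ` V"
  by (auto simp: S_def racg_S_def pres_gen_def cls_def)

lemma cw1_carr: "v \<in> V \<Longrightarrow> cw [v] \<in> carrier W"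
  unfolding W_eq carrier_pg by (rule bexI[of _ "[v]"]) auto

lemma S_carr: "S \<subseteq> carrier W"
  unfolding S_eq using cw1_carr by auto

lemma I_carr: "i \<in> I \<Longrightarrow> i \<in> carrier W" using I_sub S_carr by auto

lemma mult_W: "u \<in> lists V \<Longrightarrow> v \<in> lists V \<Longrightarrow> cw u \<otimes>\<^bsub>W\<^esub> cw v = cw (u @ v)"
  by (simp add: W_eq mult_pg)

lemma one_W: "\<one>\<^bsub>W\<^esub> = cw []" by (simp add: W_eq one_pg)

lemma carr_GG [simp]: "carrier GG = Gs" by (simp add: GG_def)
lemma mult_GG: "f \<otimes>\<^bsub>GG\<^esub> h = compose (carrier W) f h" by (simp add: GG_def AutS_def W_def)
lemma one_GG: "\<one>\<^bsub>GG\<^esub> = restrict id (carrier W)" by (simp add: GG_def AutS_def W_def)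

lemma Gs_AutS: "f \<in> Gs \<Longrightarrow> f \<in> iso W W \<and> bij_betw f S S \<and> f \<in> extensional (carrier W)"
proof -
  assume f: "f \<in> Gs"
  have "f \<in> carrier (AutS W S)" using subgroup.subset[OF G_sub] f by blast
  then show ?thesis by (simp add: AutS_def)
qed

lemma Gs_hom: "f \<in> Gs \<Longrightarrow> f \<in> hom W W" using Gs_AutS[of f] unfolding iso_def by blast

lemma Gs_mult: "f \<in> Gs \<Longrightarrow> x \<in> carrier W \<Longrightarrow> y \<in> carrier W \<Longrightarrow> f (x \<otimes>\<^bsub>W\<^esub> y) = f x \<otimes>\<^bsub>W\<^esub> f y"
  by (rule hom_mult[OF Gs_hom])

lemma Gs_carr: "f \<in> Gs \<Longrightarrow> x \<in> carrier W \<Longrightarrow> f x \<in> carrier W"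
  using Gs_hom[of f] unfolding hom_def by blast

lemma Gs_one: "f \<in> Gs \<Longrightarrow> f \<one>\<^bsub>W\<^esub> = \<one>\<^bsub>W\<^esub>"
  by (rule hom_one[OF Gs_hom grpW grpW])

lemma Gs_inj: "f \<in> Gs \<Longrightarrow> x \<in> carrier W \<Longrightarrow> y \<in> carrier W \<Longrightarrow> f x = f y \<Longrightarrow> x = y"
  using Gs_AutS[of f] unfolding iso_def bij_betw_def inj_on_def by blast

lemma Gs_S: "f \<in> Gs \<Longrightarrow> x \<in> S \<Longrightarrow> f x \<in> S"
  using Gs_AutS[of f] unfolding bij_betw_def by blast

lemma Gs_closed: "f \<in> Gs \<Longrightarrow> h \<in> Gs \<Longrightarrow> f \<otimes>\<^bsub>GG\<^esub> h \<in> Gs"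
  using subgroup.m_closed[OF G_sub] by (simp add: GG_def W_def S_def)

lemma Gs_oneI: "\<one>\<^bsub>GG\<^esub> \<in> Gs"
  using subgroup.one_closed[OF G_sub] by (simp add: GG_def W_def S_def)

lemma GG_eval: "x \<in> carrier W \<Longrightarrow> (f \<otimes>\<^bsub>GG\<^esub> h) x = f (h x)"
  by (simp add: mult_GG compose_eq)

lemma one_eval: "x \<in> carrier W \<Longrightarrow> \<one>\<^bsub>GG\<^esub> x = x"
  by (simp add: one_GG)

lemma Gs_ext: "f \<in> Gs \<Longrightarrow> h \<in> Gs \<Longrightarrow> (\<And>x. x \<in> carrier W \<Longrightarrow> f x = h x) \<Longrightarrow> f = h"
  by (rule extensionalityI[of f "carrier W" h]) (use Gs_AutS in auto)

lemma gI: "i \<in> I \<Longrightarrow> g i \<in> Gs" using g_in by auto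

lemma g_g: "i \<in> I \<Longrightarrow> x \<in> carrier W \<Longrightarrow> g i (g i x) = x"
  using g_invol GG_eval[of x "g i" "g i"] one_eval[of x] by auto

lemma g_i_i: "i \<in> I \<Longrightarrow> g i i = i" using cond_iii by auto


abbreviation "SD \<equiv> sdprod W GG"

lemma carr_SD: "carrier SD = carrier W \<times> Gs" by (simp add: sdprod_def)
lemma mult_SD: "(x, a) \<otimes>\<^bsub>SD\<^esub> (y, b) = (x \<otimes>\<^bsub>W\<^esub> a y, a \<otimes>\<^bsub>GG\<^esub> b)" by (simp add: sdprod_def)
lemma one_SD: "\<one>\<^bsub>SD\<^esub> = (\<one>\<^bsub>W\<^esub>, \<one>\<^bsub>GG\<^esub>)" by (simp add: sdprod_def)

lemma GG_l_one: "b \<in> Gs \<Longrightarrow> \<one>\<^bsub>GG\<^esub> \<otimes>\<^bsub>GG\<^esub> b = b"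
  by (rule Gs_ext) (auto simp: Gs_closed Gs_oneI GG_eval one_eval Gs_carr)

lemma GG_r_one: "b \<in> Gs \<Longrightarrow> b \<otimes>\<^bsub>GG\<^esub> \<one>\<^bsub>GG\<^esub> = b"
  by (rule Gs_ext) (auto simp: Gs_closed Gs_oneI GG_eval one_eval Gs_carr)

lemma GG_assoc: "a \<in> Gs \<Longrightarrow> b \<in> Gs \<Longrightarrow> c \<in> Gs \<Longrightarrow> (a \<otimes>\<^bsub>GG\<^esub> b) \<otimes>\<^bsub>GG\<^esub> c = a \<otimes>\<^bsub>GG\<^esub> (b \<otimes>\<^bsub>GG\<^esub> c)"
  by (rule Gs_ext) (auto simp: Gs_closed GG_eval Gs_carr)

lemma monoid_SD: "monoid SD"
proof (rule monoidI)
  fix p q assume "p \<in> carrier SD" "q \<in> carrier SD"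
  then show "p \<otimes>\<^bsub>SD\<^esub> q \<in> carrier SD"
    by (cases p, cases q) (auto simp: carr_SD mult_SD Gs_closed Gs_carr group.is_monoid[OF grpW] monoid.m_closed)
next
  show "\<one>\<^bsub>SD\<^esub> \<in> carrier SD" by (simp add: carr_SD one_SD Gs_oneI group.is_monoid[OF grpW] monoid.one_closed)
next
  fix p q r assume "p \<in> carrier SD" "q \<in> carrier SD" "r \<in> carrier SD"
  then obtain x a y b z c where pqr: "p = (x, a)" "q = (y, b)" "r = (z, c)"
    and h: "x \<in> carrier W" "y \<in> carrier W" "z \<in> carrier W" "a \<in> Gs" "b \<in> Gs" "c \<in> Gs"
    by (cases p, cases q, cases r) (auto simp: carr_SD)
  interpret Wg: group W by (rule grpW)
  have "(x \<otimes>\<^bsub>W\<^esub> a y) \<otimes>\<^bsub>W\<^esub> (a \<otimes>\<^bsub>GG\<^esub> b) z = x \<otimes>\<^bsub>W\<^esub> a (y \<otimes>\<^bsub>W\<^esub> b z)"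
    using h by (simp add: GG_eval Gs_mult Gs_carr Wg.m_assoc)
  then show "p \<otimes>\<^bsub>SD\<^esub> q \<otimes>\<^bsub>SD\<^esub> r = p \<otimes>\<^bsub>SD\<^esub> (q \<otimes>\<^bsub>SD\<^esub> r)"
    using h by (simp add: pqr mult_SD GG_assoc)
next
  fix p assume "p \<in> carrier SD"
  then obtain y b where p: "p = (y, b)" "y \<in> carrier W" "b \<in> Gs" by (cases p) (auto simp: carr_SD)
  interpret Wg: group W by (rule grpW)
  show "\<one>\<^bsub>SD\<^esub> \<otimes>\<^bsub>SD\<^esub> p = p" using p by (simp add: one_SD mult_SD one_eval GG_l_one)
  show "p \<otimes>\<^bsub>SD\<^esub> \<one>\<^bsub>SD\<^esub> = p" using p by (simp add: one_SD mult_SD Gs_one GG_r_one)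
qed

abbreviation "RL \<equiv> L_rel W GG I g"
abbreviation "PhiL \<equiv> Phi W GG g"

lemma gen_carr: "i \<in> I \<Longrightarrow> (i, g i) \<in> carrier SD" by (simp add: carr_SD I_carr gI)

lemma Phi_Nil [simp]: "PhiL [] = \<one>\<^bsub>SD\<^esub>" by (simp add: Phi_def)
lemma Phi_Cons: "PhiL (i # w) = (i, g i) \<otimes>\<^bsub>SD\<^esub> PhiL w" by (simp add: Phi_def)

lemma Phi_carr: "w \<in> lists I \<Longrightarrow> PhiL w \<in> carrier SD"
  by (induction w) (auto simp: Phi_Cons gen_carr monoid.m_closed[OF monoid_SD] monoid.one_closed[OF monoid_SD])

lemma Phi_append: "u \<in> lists I \<Longrightarrow> v \<in> lists I \<Longrightarrow> PhiL (u @ v) = PhiL u \<otimes>\<^bsub>SD\<^esub> PhiL v"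
  by (induction u) (auto simp: Phi_Cons gen_carr Phi_carr monoid.m_assoc[OF monoid_SD] monoid.l_one[OF monoid_SD])

lemma Phi_single: "i \<in> I \<Longrightarrow> PhiL [i] = (i, g i)"
  by (simp add: Phi_Cons gen_carr monoid.r_one[OF monoid_SD])

lemma S_sq: "s \<in> S \<Longrightarrow> s \<otimes>\<^bsub>W\<^esub> s = \<one>\<^bsub>W\<^esub>"
proof -
  assume "s \<in> S"
  then obtain v where v: "v \<in> V" "s = cw [v]" by (auto simp: S_eq)
  have "([v, v], []) \<in> pres_eq V Rw" using pe_inv[of "[]" V "[]" v Rw] v by simp
  then have "cw [v, v] = cw []" using v by (simp add: cls_eq)
  then show ?thesis using v by (simp add: mult_W one_W)
qed

lemma Phi_ii: "i \<in> I \<Longrightarrow> PhiL [i, i] = \<one>\<^bsub>SD\<^esub>"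
proof -
  assume i: "i \<in> I"
  have "PhiL [i, i] = (i, g i) \<otimes>\<^bsub>SD\<^esub> (i, g i)" using Phi_append[of "[i]" "[i]"] i by (simp add: Phi_single)
  also have "\<dots> = (\<one>\<^bsub>W\<^esub>, \<one>\<^bsub>GG\<^esub>)" using i I_sub g_invol by (simp add: mult_SD g_i_i S_sq subsetD)
  finally show ?thesis by (simp add: one_SD)
qed

lemma comm_g:
  assumes i: "i \<in> I" and x: "x \<in> carrier W" and c: "i \<otimes>\<^bsub>W\<^esub> x = x \<otimes>\<^bsub>W\<^esub> i"
  shows "i \<otimes>\<^bsub>W\<^esub> g i x = g i x \<otimes>\<^bsub>W\<^esub> i"
proof -
  have "g i (i \<otimes>\<^bsub>W\<^esub> x) = g i (x \<otimes>\<^bsub>W\<^esub> i)" using c by simp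
  then show ?thesis using i x by (simp add: Gs_mult gI I_carr g_i_i)
qed

lemma Phi_rel:
  assumes "(a, b) \<in> RL" shows "PhiL a = PhiL b"
proof -
  from assms obtain i j where ab: "a = [i, j]" "b = [g i j, i]" and ij: "i \<in> I" "j \<in> I"
    and c: "i \<otimes>\<^bsub>W\<^esub> j = j \<otimes>\<^bsub>W\<^esub> i" and gji: "g j i = i" and k: "g i j \<in> I"
    and gk: "g (g i j) = g i \<otimes>\<^bsub>GG\<^esub> g j \<otimes>\<^bsub>GG\<^esub> g i"
    by (auto simp: L_rel_def)
  have gki: "g (g i j) i = i" using ij by (simp add: gk GG_eval I_carr g_i_i gji)
  have "PhiL a = (i, g i) \<otimes>\<^bsub>SD\<^esub> (j, g j)" using Phi_append[of "[i]" "[j]"] ij ab by (simp add: Phi_single)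
  also have "\<dots> = (i \<otimes>\<^bsub>W\<^esub> g i j, g i \<otimes>\<^bsub>GG\<^esub> g j)" by (simp add: mult_SD)
  also have "\<dots> = (g i j \<otimes>\<^bsub>W\<^esub> i, g (g i j) \<otimes>\<^bsub>GG\<^esub> g i)"
  proof -
    have "i \<otimes>\<^bsub>W\<^esub> g i j = g i j \<otimes>\<^bsub>W\<^esub> i" using comm_g[OF ij(1) I_carr[OF ij(2)] c] .
    moreover have "g i \<otimes>\<^bsub>GG\<^esub> g j = g (g i j) \<otimes>\<^bsub>GG\<^esub> g i"
      by (rule Gs_ext) (use ij in \<open>auto simp: gk Gs_closed gI GG_eval Gs_carr g_g\<close>)
    ultimately show ?thesis by simp
  qed
  also have "\<dots> = (g i j, g (g i j)) \<otimes>\<^bsub>SD\<^esub> (i, g i)" by (simp add: mult_SD gki)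
  also have "\<dots> = PhiL b" using Phi_append[of "[g i j]" "[i]"] ij k ab by (simp add: Phi_single)
  finally show ?thesis .
qed

lemma Phi_pe: "(u, v) \<in> pres_eq I RL \<Longrightarrow> PhiL u = PhiL v"
proof (induction rule: pres_eq.induct)
  case (pe_inv u v x)
  then show ?case using Phi_append[of u "[x, x] @ v"] Phi_append[of "[x, x]" v] Phi_append[of u v]
    by (simp add: Phi_ii Phi_carr monoid.l_one[OF monoid_SD])
next
  case (pe_rel u v a b)
  then show ?case using Phi_append[of u "a @ v"] Phi_append[of a v] Phi_append[of u "b @ v"] Phi_append[of b v]
      Phi_rel[OF pe_rel(3)] by simp
qed auto


abbreviation "sg \<equiv> sig GG g"
abbreviation "hq \<equiv> hp GG g"
abbreviation "peL \<equiv> pres_eq I RL"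

lemma hp_Gs: "h \<in> Gs \<Longrightarrow> w \<in> lists I \<Longrightarrow> hq h w \<in> Gs"
  by (induction w arbitrary: h) (auto simp: Gs_closed gI)

lemma sig_S: "h \<in> Gs \<Longrightarrow> w \<in> lists I \<Longrightarrow> set (sg h w) \<subseteq> S"
proof (induction w arbitrary: h)
  case (Cons i w)
  then have "h i \<in> S" using Gs_S I_sub by auto
  then show ?case using Cons by (auto simp: Gs_closed gI)
qed simp

lemma fst_Phi: "h \<in> Gs \<Longrightarrow> w \<in> lists I \<Longrightarrow> h (fst (PhiL w)) = prodW W (sg h w)"
proof (induction w arbitrary: h)
  case Nil then show ?case by (simp add: one_SD prodW_def Gs_one)
next
  case (Cons i w)
  then have i: "i \<in> I" and w: "w \<in> lists I" by auto
  obtain x b where xb: "PhiL w = (x, b)" by (cases "PhiL w")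
  then have x: "x \<in> carrier W" using Phi_carr[OF w] by (simp add: carr_SD)
  have "h (fst (PhiL (i # w))) = h (i \<otimes>\<^bsub>W\<^esub> g i x)" by (simp add: Phi_Cons xb mult_SD)
  also have "\<dots> = h i \<otimes>\<^bsub>W\<^esub> (h \<otimes>\<^bsub>GG\<^esub> g i) x"
    using Cons.prems i x by (simp add: Gs_mult I_carr Gs_carr gI GG_eval)
  also have "(h \<otimes>\<^bsub>GG\<^esub> g i) x = prodW W (sg (h \<otimes>\<^bsub>GG\<^esub> g i) w)"
    using Cons.IH[of "h \<otimes>\<^bsub>GG\<^esub> g i"] Cons.prems i w xb by (simp add: Gs_closed gI)
  finally show ?case by (simp add: prodW_def)
qed

definition rep :: "'v list set \<Rightarrow> 'v" where "rep s = (SOME v. v \<in> V \<and> s = cw [v])"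

lemma rep_prop: "s \<in> S \<Longrightarrow> rep s \<in> V \<and> s = cw [rep s]"
  unfolding rep_def by (rule someI_ex) (auto simp: S_eq)

lemma prodW_S: "set xs \<subseteq> S \<Longrightarrow> prodW W xs = cw (map rep xs) \<and> map rep xs \<in> lists V"
proof (induction xs)
  case Nil then show ?case by (simp add: prodW_def one_W)
next
  case (Cons s xs)
  then have s: "rep s \<in> V" "s = cw [rep s]" using rep_prop by auto
  have "prodW W (s # xs) = s \<otimes>\<^bsub>W\<^esub> prodW W xs" by (simp add: prodW_def)
  also have "\<dots> = cw [rep s] \<otimes>\<^bsub>W\<^esub> cw (map rep xs)" using Cons s by simp
  also have "\<dots> = cw ([rep s] @ map rep xs)" using Cons s by (intro mult_W) auto
  finally show ?case using Cons s by simp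
qed

abbreviation "CS \<equiv> (\<lambda>a c. a \<otimes>\<^bsub>W\<^esub> c = c \<otimes>\<^bsub>W\<^esub> a)"

lemma cw_notV: "x \<notin> V \<Longrightarrow> cw [x] = {}"
  using pe_lists[of "[x]" _ V Rw] by (auto simp: cls_def)

lemma Cv_CS: "Cv E x y \<Longrightarrow> CS (cw [x]) (cw [y])"
proof -
  assume c: "Cv E x y"
  show ?thesis
  proof (cases "x \<in> V \<and> y \<in> V")
    case True
    have "([x, y], [y, x]) \<in> pres_eq V Rw" if "x \<noteq> y"
    proof -
      have "E x y \<or> E y x" using c that by (auto simp: Cv_def)
      then show ?thesis
      proof
        assume "E x y"
        then have "([x, y], [y, x]) \<in> Rw" using True by (auto simp: racg_rel_def)
        then show ?thesis using pe_rel[of "[]" V "[]" "[x, y]" "[y, x]" Rw] True by simp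
      next
        assume "E y x"
        then have "([y, x], [x, y]) \<in> Rw" using True by (auto simp: racg_rel_def)
        then show ?thesis using pe_rel[of "[]" V "[]" "[y, x]" "[x, y]" Rw] True by (simp add: pe_sym)
      qed
    qed
    then show ?thesis using True by (cases "x = y") (auto simp: mult_W cls_eq)
  next
    case False
    then show ?thesis by (auto simp: cw_notV W_eq pres_group_def)
  qed
qed

lemma swap2:
  assumes ij: "i \<in> I" "j \<in> I" and h: "h \<in> Gs" and c: "CS (h i) (h (g i j))"
  shows "\<exists>i' j'. i' \<in> I \<and> j' \<in> I \<and> ([i, j], [i', j']) \<in> peL \<and>
           sg h [i', j'] = [h (g i j), h i] \<and> hq h [i', j'] = hq h [i, j]"
proof -
  have ic: "i \<in> carrier W" "j \<in> carrier W" "g i j \<in> carrier W" using ij by (auto simp: I_carr Gs_carr gI)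
  have "h (i \<otimes>\<^bsub>W\<^esub> g i j) = h (g i j \<otimes>\<^bsub>W\<^esub> i)" using c ic h by (simp add: Gs_mult)
  then have "i \<otimes>\<^bsub>W\<^esub> g i j = g i j \<otimes>\<^bsub>W\<^esub> i"
    using Gs_inj[OF h] ic grpW by (meson group.is_monoid monoid.m_closed)
  from comm_g[OF ij(1) ic(3) this] have cij: "i \<otimes>\<^bsub>W\<^esub> j = j \<otimes>\<^bsub>W\<^esub> i" using ij ic by (simp add: g_g)
  from cond_ii ij cij have
    "(g i j \<in> I \<and> g j i = i \<and> g (g i j) = g i \<otimes>\<^bsub>GG\<^esub> g j \<otimes>\<^bsub>GG\<^esub> g i) \<or>
     (g j i \<in> I \<and> g i j = j \<and> g (g j i) = g j \<otimes>\<^bsub>GG\<^esub> g i \<otimes>\<^bsub>GG\<^esub> g j)" by blast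
  then show ?thesis
  proof
    assume A: "g i j \<in> I \<and> g j i = i \<and> g (g i j) = g i \<otimes>\<^bsub>GG\<^esub> g j \<otimes>\<^bsub>GG\<^esub> g i"
    define k where "k = g i j"
    have kI: "k \<in> I" and gji: "g j i = i" and gk: "g k = g i \<otimes>\<^bsub>GG\<^esub> g j \<otimes>\<^bsub>GG\<^esub> g i" using A by (auto simp: k_def)
    have rel: "([i, j], [k, i]) \<in> RL" unfolding L_rel_def k_def using ij cij A by auto
    have pe: "([i, j], [k, i]) \<in> peL" using pe_rel[of "[]" I "[]" "[i, j]" "[k, i]" RL] rel ij kI by simp
    have gki: "g k i = i" using ij by (simp add: gk GG_eval I_carr g_i_i gji)
    have "sg h [k, i] = [h k, h i]" using h ij kI by (simp add: GG_eval I_carr gki)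
    then have s: "sg h [k, i] = [h (g i j), h i]" by (simp add: k_def)
    have "hq h [k, i] = hq h [i, j]"
      using h ij kI by (auto intro!: Gs_ext simp: Gs_closed gI GG_eval Gs_carr gk g_g)
    then show ?thesis using kI ij pe s by blast
  next
    assume B: "g j i \<in> I \<and> g i j = j \<and> g (g j i) = g j \<otimes>\<^bsub>GG\<^esub> g i \<otimes>\<^bsub>GG\<^esub> g j"
    define k where "k = g j i"
    have kI: "k \<in> I" and gij: "g i j = j" and gk: "g k = g j \<otimes>\<^bsub>GG\<^esub> g i \<otimes>\<^bsub>GG\<^esub> g j" using B by (auto simp: k_def)
    have cji: "j \<otimes>\<^bsub>W\<^esub> i = i \<otimes>\<^bsub>W\<^esub> j" using cij by simp
    have rel: "([j, i], [k, j]) \<in> RL" unfolding L_rel_def k_def using ij cji B by auto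
    have p1: "([i, j], [j, j, i, j]) \<in> peL" using pe_inv[of "[]" I "[i, j]" j RL] ij by (simp add: pe_sym)
    have p2: "([j, j, i, j], [j, k, j, j]) \<in> peL" using pe_rel[of "[j]" I "[j]" "[j, i]" "[k, j]" RL] rel ij kI by simp
    have p3: "([j, k, j, j], [j, k]) \<in> peL" using pe_inv[of "[j, k]" I "[]" j RL] ij kI by simp
    have pe: "([i, j], [j, k]) \<in> peL" using p1 p2 p3 by (meson pe_trans)
    have s: "sg h [j, k] = [h (g i j), h i]" using h ij kI by (simp add: GG_eval I_carr k_def g_g gij)
    have "hq h [j, k] = hq h [i, j]"
      using h ij kI by (auto intro!: Gs_ext simp: Gs_closed gI GG_eval Gs_carr gk g_g)
    then show ?thesis using kI ij pe s by blast
  qed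
qed


lemma split_sig:
  assumes w: "w \<in> lists I" and e: "sg h w = u @ r"
  shows "\<exists>w1 w2. w = w1 @ w2 \<and> w1 \<in> lists I \<and> w2 \<in> lists I \<and> sg h w1 = u \<and> sg (hq h w1) w2 = r"
proof -
  define w1 where "w1 = take (length u) w"
  define w2 where "w2 = drop (length u) w"
  have ww: "w = w1 @ w2" by (simp add: w1_def w2_def)
  have "length w = length u + length r" using arg_cong[OF e, of length] by simp
  then have l: "length (sg h w1) = length u" by (simp add: w1_def)
  have "sg h w1 @ sg (hq h w1) w2 = u @ r" using e ww by (simp add: sig_append)
  then have "sg h w1 = u \<and> sg (hq h w1) w2 = r" using l by (simp add: append_eq_append_conv)
  moreover have "w1 \<in> lists I" "w2 \<in> lists I" using w ww by auto
  ultimately show ?thesis using ww by blast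
qed

lemma pe_prefix: "(x, y) \<in> peL \<Longrightarrow> w1 \<in> lists I \<Longrightarrow> (w1 @ x, w1 @ y) \<in> peL"
  using pe_cong[of x y I RL w1 "[]"] by simp

lemma lift_swap0:
  assumes w: "w \<in> lists I" and h: "h \<in> Gs" and e: "sg h w = s # t # v" and c: "CS s t"
  shows "\<exists>w'\<in>lists I. (w, w') \<in> peL \<and> sg h w' = t # s # v"
proof -
  obtain i j w3 where ww: "w = i # j # w3" using e by (cases w; cases "tl w") auto
  then have ij: "i \<in> I" "j \<in> I" "w3 \<in> lists I" using w by auto
  have st: "s = h i" "t = h (g i j)" using e ww ij h by (auto simp: GG_eval I_carr)
  have v: "v = sg (hq h [i, j]) w3" using e ww sig_append[of GG g h "[i, j]" w3] by simp
  from swap2[OF ij(1,2) h] c st obtain i' j' where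
    i'j': "i' \<in> I" "j' \<in> I" "([i, j], [i', j']) \<in> peL" "sg h [i', j'] = [h (g i j), h i]" "hq h [i', j'] = hq h [i, j]"
    by blast
  have "(w, i' # j' # w3) \<in> peL" using pe_cong[OF i'j'(3), of "[]" w3] ww ij by simp
  moreover have "sg h (i' # j' # w3) = t # s # v"
    using sig_append[of GG g h "[i', j']" w3] i'j' st v by simp
  moreover have "i' # j' # w3 \<in> lists I" using i'j' ij by simp
  ultimately show ?thesis by blast
qed

lemma lift_swap:
  assumes w: "w \<in> lists I" and h: "h \<in> Gs" and e: "sg h w = u @ s # t # v" and c: "CS s t"
  shows "\<exists>w'\<in>lists I. (w, w') \<in> peL \<and> sg h w' = u @ t # s # v"
proof -
  from split_sig[OF w e] obtain w1 w2 where sp: "w = w1 @ w2" "w1 \<in> lists I" "w2 \<in> lists I"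
    "sg h w1 = u" "sg (hq h w1) w2 = s # t # v" by blast
  from lift_swap0[OF sp(3) hp_Gs[OF h sp(2)] sp(5) c] obtain w2' where
    w2': "w2' \<in> lists I" "(w2, w2') \<in> peL" "sg (hq h w1) w2' = t # s # v" by blast
  have "(w, w1 @ w2') \<in> peL" using pe_prefix[OF w2'(2) sp(2)] sp(1) by simp
  moreover have "sg h (w1 @ w2') = u @ t # s # v" using sp w2' by (simp add: sig_append)
  moreover have "w1 @ w2' \<in> lists I" using sp w2' by simp
  ultimately show ?thesis by blast
qed

lemma lift_cancel0:
  assumes "w \<in> lists I" "h \<in> Gs" "sg h w = a # m @ a # v" "\<forall>c\<in>set m. CS a c"
  shows "\<exists>w'\<in>lists I. (w, w') \<in> peL \<and> sg h w' = m @ v"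
  using assms
proof (induction m arbitrary: h w)
  case Nil
  obtain i j w3 where ww: "w = i # j # w3" using Nil.prems(3) by (cases w; cases "tl w") auto
  then have ij: "i \<in> I" "j \<in> I" "w3 \<in> lists I" using Nil.prems by auto
  have "h i = h (g i j)" using Nil.prems(2,3) ww ij by (auto simp: GG_eval I_carr)
  then have "i = g i j" using Gs_inj[OF Nil.prems(2)] ij by (simp add: I_carr Gs_carr gI)
  then have ji: "j = i" using g_g[OF ij(1) I_carr[OF ij(2)]] by (simp add: g_i_i ij)
  have hh: "(h \<otimes>\<^bsub>GG\<^esub> g i) \<otimes>\<^bsub>GG\<^esub> g i = h"
    using Nil.prems(2) ij by (auto intro!: Gs_ext simp: Gs_closed gI GG_eval Gs_carr g_g)
  have "(w, w3) \<in> peL" using pe_inv[of "[]" I w3 i RL] ww ji ij by simp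
  moreover have "sg h w3 = v" using Nil.prems(3) ww ji hh by simp
  ultimately show ?case using ij by auto
next
  case (Cons c m')
  have c: "CS a c" using Cons.prems(4) by simp
  have "sg h w = a # c # (m' @ a # v)" using Cons.prems(3) by simp
  from lift_swap0[OF Cons.prems(1,2) this c] obtain w'' where
    w'': "w'' \<in> lists I" "(w, w'') \<in> peL" "sg h w'' = c # a # m' @ a # v" by blast
  obtain i w3 where ww: "w'' = i # w3" using w''(3) by (cases w'') auto
  then have i: "i \<in> I" "w3 \<in> lists I" using w'' by auto
  have e3: "sg (h \<otimes>\<^bsub>GG\<^esub> g i) w3 = a # m' @ a # v" and hi: "h i = c" using w''(3) ww by auto
  from Cons.IH[OF i(2) Gs_closed[OF Cons.prems(2) gI[OF i(1)]] e3] Cons.prems(4) obtain w4 where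
    w4: "w4 \<in> lists I" "(w3, w4) \<in> peL" "sg (h \<otimes>\<^bsub>GG\<^esub> g i) w4 = m' @ v" by auto
  have "(w, i # w4) \<in> peL" using w''(2) pe_prefix[OF w4(2), of "[i]"] ww i by (auto intro: pe_trans)
  moreover have "sg h (i # w4) = (c # m') @ v" using w4 hi by simp
  moreover have "i # w4 \<in> lists I" using w4 i by simp
  ultimately show ?case by blast
qed

lemma lift_cancel:
  assumes w: "w \<in> lists I" and h: "h \<in> Gs" and e: "sg h w = u @ a # m @ a # v" and c: "\<forall>c\<in>set m. CS a c"
  shows "\<exists>w'\<in>lists I. (w, w') \<in> peL \<and> sg h w' = u @ m @ v"
proof -
  from split_sig[OF w e] obtain w1 w2 where sp: "w = w1 @ w2" "w1 \<in> lists I" "w2 \<in> lists I"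
    "sg h w1 = u" "sg (hq h w1) w2 = a # m @ a # v" by blast
  from lift_cancel0[OF sp(3) hp_Gs[OF h sp(2)] sp(5) c] obtain w2' where
    w2': "w2' \<in> lists I" "(w2, w2') \<in> peL" "sg (hq h w1) w2' = m @ v" by blast
  have "(w, w1 @ w2') \<in> peL" using pe_prefix[OF w2'(2) sp(2)] sp(1) by simp
  moreover have "sg h (w1 @ w2') = u @ m @ v" using sp w2' by (simp add: sig_append)
  moreover have "w1 @ w2' \<in> lists I" using sp w2' by simp
  ultimately show ?thesis by blast
qed

lemma KL:
  assumes "(stp CS)\<^sup>*\<^sup>* \<tau> []"
  shows "h \<in> Gs \<Longrightarrow> w \<in> lists I \<Longrightarrow> sg h w = \<tau> \<Longrightarrow> (w, []) \<in> peL"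
  using assms
proof (induction arbitrary: h w rule: converse_rtranclp_induct)
  case base
  then have "w = []" using length_sig[of GG g h w] by auto
  then show ?case by (auto intro: pe_refl)
next
  case (step \<tau> \<tau>1)
  have "\<exists>w'\<in>lists I. (w, w') \<in> peL \<and> sg h w' = \<tau>1"
  proof -
    have "swp CS \<tau> \<tau>1 \<or> cancels CS \<tau> \<tau>1" using step.hyps(1) by (simp add: stp_def)
    then show ?thesis
    proof
      assume "swp CS \<tau> \<tau>1"
      then show ?thesis
      proof (cases rule: swp.cases)
        case (sI s t u v)
        then show ?thesis using lift_swap[OF step.prems(2,1), of u s t v] step.prems(3) by auto
      qed
    next
      assume "cancels CS \<tau> \<tau>1"
      then show ?thesis
      proof (cases rule: cancels.cases)
        case (cI m a u v)
        then show ?thesis using lift_cancel[OF step.prems(2,1), of u a m v] step.prems(3) by auto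
      qed
    qed
  qed
  then obtain w' where "w' \<in> lists I" "(w, w') \<in> peL" "sg h w' = \<tau>1" by blast
  with step.IH[OF step.prems(1)] show ?case by (auto intro: pe_trans)
qed

lemma inj_core:
  assumes w: "w \<in> lists I" and P: "PhiL w = \<one>\<^bsub>SD\<^esub>"
  shows "(w, []) \<in> peL"
proof -
  define \<sigma> where "\<sigma> = sg \<one>\<^bsub>GG\<^esub> w"
  have sS: "set \<sigma> \<subseteq> S" using sig_S[OF Gs_oneI w] by (simp add: \<sigma>_def)
  have "\<one>\<^bsub>GG\<^esub> (fst (PhiL w)) = prodW W \<sigma>" using fst_Phi[OF Gs_oneI w] by (simp add: \<sigma>_def)
  moreover have "fst (PhiL w) = \<one>\<^bsub>W\<^esub>" using P by (simp add: one_SD)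
  moreover have "\<one>\<^bsub>W\<^esub> \<in> carrier W" by (rule monoid.one_closed[OF group.is_monoid[OF grpW]])
  ultimately have "prodW W \<sigma> = cw []" by (simp add: one_eval one_W)
  with prodW_S[OF sS] have "cw (map rep \<sigma>) = cw []" "map rep \<sigma> \<in> lists V" by auto
  then have "(map rep \<sigma>, []) \<in> pres_eq V Rw" by (simp add: cls_eq)
  then have "Pr (Cv E) (map rep \<sigma>)" using racg_Pr[of "map rep \<sigma>" "[]" V E] by (simp add: Pr_def)
  moreover have "\<And>x y. Cv E x y \<Longrightarrow> CS (cw [x]) (cw [y])" by (rule Cv_CS)
  ultimately have "Pr CS (map (\<lambda>x. cw [x]) (map rep \<sigma>))"
    using Pr_map[where C="Cv E" and C'=CS and f="\<lambda>x. cw [x]" and u="map rep \<sigma>"] by blast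
  moreover have "map (\<lambda>x. cw [x]) (map rep \<sigma>) = \<sigma>"
    using sS rep_prop by (induction \<sigma>) auto
  ultimately have "(stp CS)\<^sup>*\<^sup>* \<sigma> []" by (simp add: Pr_def)
  then show ?thesis using KL Gs_oneI w by (simp add: \<sigma>_def)
qed


abbreviation "gens \<equiv> {(i, g i) | i. i \<in> I}"

lemma carr_H: "carrier (H_grp W GG I g) = generate SD gens" by (simp add: H_grp_def)
lemma mult_H: "x \<otimes>\<^bsub>H_grp W GG I g\<^esub> y = x \<otimes>\<^bsub>SD\<^esub> y" by (simp add: H_grp_def)

lemma Phi_gen: "w \<in> lists I \<Longrightarrow> PhiL w \<in> generate SD gens"
proof (induction w)
  case Nil then show ?case by (simp add: generate.one)
next
  case (Cons i w)
  then have "(i, g i) \<in> generate SD gens" by (auto intro: generate.incl)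
  then show ?case using Cons by (auto simp: Phi_Cons intro: generate.eng)
qed

lemma inv_gen: "i \<in> I \<Longrightarrow> inv\<^bsub>SD\<^esub> (i, g i) = (i, g i)"
proof -
  assume i: "i \<in> I"
  have sq: "(i, g i) \<otimes>\<^bsub>SD\<^esub> (i, g i) = \<one>\<^bsub>SD\<^esub>"
    using Phi_ii[OF i] Phi_append[of "[i]" "[i]"] i by (simp add: Phi_single)
  show ?thesis unfolding m_inv_def
  proof (rule the_equality)
    show "(i, g i) \<in> carrier SD \<and> (i, g i) \<otimes>\<^bsub>SD\<^esub> (i, g i) = \<one>\<^bsub>SD\<^esub> \<and> (i, g i) \<otimes>\<^bsub>SD\<^esub> (i, g i) = \<one>\<^bsub>SD\<^esub>"
      using sq gen_carr[OF i] by simp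
  next
    fix y assume "y \<in> carrier SD \<and> (i, g i) \<otimes>\<^bsub>SD\<^esub> y = \<one>\<^bsub>SD\<^esub> \<and> y \<otimes>\<^bsub>SD\<^esub> (i, g i) = \<one>\<^bsub>SD\<^esub>"
    then show "y = (i, g i)" using monoid.inv_unique[OF monoid_SD, of y "(i, g i)" "(i, g i)"] sq gen_carr[OF i] by simp
  qed
qed

abbreviation "clL \<equiv> cls I RL"

definition phi where "phi C = PhiL (SOME w. w \<in> C)"

lemma phi_cls: "u \<in> lists I \<Longrightarrow> phi (clL u) = PhiL u"
proof -
  assume u: "u \<in> lists I"
  have "u \<in> clL u" by (rule cls_self[OF u])
  then have "(SOME w. w \<in> clL u) \<in> clL u" by (rule someI)
  then have "(u, SOME w. w \<in> clL u) \<in> peL" by (simp add: in_cls)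
  then show ?thesis unfolding phi_def using Phi_pe by metis
qed

lemma phi_iso: "phi \<in> iso (pres_group I RL) (H_grp W GG I g)"
proof -
  have hom: "phi \<in> hom (pres_group I RL) (H_grp W GG I g)"
  proof (rule homI)
    fix x assume "x \<in> carrier (pres_group I RL)"
    then obtain u where "u \<in> lists I" "x = clL u" by (auto simp: carrier_pg)
    then show "phi x \<in> carrier (H_grp W GG I g)" by (simp add: phi_cls carr_H Phi_gen)
  next
    fix x y assume "x \<in> carrier (pres_group I RL)" "y \<in> carrier (pres_group I RL)"
    then obtain u v where uv: "u \<in> lists I" "x = clL u" "v \<in> lists I" "y = clL v" by (auto simp: carrier_pg)
    then have "u @ v \<in> lists I" by simp
    then show "phi (x \<otimes>\<^bsub>pres_group I RL\<^esub> y) = phi x \<otimes>\<^bsub>H_grp W GG I g\<^esub> phi y"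
      using uv by (simp add: mult_pg phi_cls Phi_append mult_H)
  qed
  have inj: "inj_on phi (carrier (pres_group I RL))"
  proof (rule inj_onI)
    fix x y assume "x \<in> carrier (pres_group I RL)" "y \<in> carrier (pres_group I RL)" and e: "phi x = phi y"
    then obtain u v where uv: "u \<in> lists I" "x = clL u" "v \<in> lists I" "y = clL v" by (auto simp: carrier_pg)
    have rv: "rev v \<in> lists I" using uv(3) by (metis set_rev in_lists_conv_set)
    have P: "PhiL u = PhiL v" using e uv by (simp add: phi_cls)
    have "PhiL (u @ rev v) = PhiL v \<otimes>\<^bsub>SD\<^esub> PhiL (rev v)" using Phi_append[OF uv(1) rv] P by simp
    also have "\<dots> = PhiL (v @ rev v)" using Phi_append[OF uv(3) rv] by simp
    also have "\<dots> = PhiL []" using Phi_pe rev_pe[OF uv(3)] by blast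
    finally have "(u @ rev v, []) \<in> peL" using inj_core uv rv by simp
    then have 1: "((u @ rev v) @ v, [] @ v) \<in> peL" using pe_cong[of "u @ rev v" "[]" I RL "[]" v] uv by simp
    have "(u @ (rev v @ v), u @ []) \<in> peL" using pe_cong[of "rev v @ v" "[]" I RL u "[]"] uv rev_pe[OF uv(3)] by simp
    then have 2: "(u @ rev v @ v, u) \<in> peL" by simp
    have "(u, v) \<in> peL" using pe_trans[OF pe_sym[OF 2]] 1 by simp
    then show "x = y" using uv cls_eq by metis
  qed
  have sur: "phi ` carrier (pres_group I RL) = carrier (H_grp W GG I g)"
  proof
    show "phi ` carrier (pres_group I RL) \<subseteq> carrier (H_grp W GG I g)"
      using hom by (auto simp: hom_def)
  next
    have "z \<in> phi ` carrier (pres_group I RL)" if "z \<in> generate SD gens" for z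
      using that
    proof (induction rule: generate.induct)
      case one
      have "[] \<in> lists I" by simp
      then have "clL [] \<in> carrier (pres_group I RL)" by (auto simp: carrier_pg)
      moreover have "phi (clL []) = \<one>\<^bsub>SD\<^esub>" by (simp add: phi_cls)
      ultimately show ?case by force
    next
      case (incl h)
      then obtain i where i: "i \<in> I" "h = (i, g i)" by auto
      then have "clL [i] \<in> carrier (pres_group I RL)" by (auto simp: carrier_pg)
      moreover have "phi (clL [i]) = h" using i by (simp add: phi_cls Phi_single)
      ultimately show ?case by force
    next
      case (inv h)
      then obtain i where i: "i \<in> I" "h = (i, g i)" by auto
      then have "clL [i] \<in> carrier (pres_group I RL)" by (auto simp: carrier_pg)
      moreover have "phi (clL [i]) = inv\<^bsub>SD\<^esub> h" using i by (simp add: phi_cls Phi_single inv_gen)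
      ultimately show ?case by force
    next
      case (eng h1 h2)
      then obtain x y where "x \<in> carrier (pres_group I RL)" "y \<in> carrier (pres_group I RL)" "h1 = phi x" "h2 = phi y" by auto
      then obtain u v where uv: "u \<in> lists I" "v \<in> lists I" "h1 = PhiL u" "h2 = PhiL v"
        unfolding carrier_pg using phi_cls by metis
      then have "u @ v \<in> lists I" by simp
      then have "clL (u @ v) \<in> carrier (pres_group I RL)" unfolding carrier_pg by blast
      moreover have "phi (clL (u @ v)) = h1 \<otimes>\<^bsub>SD\<^esub> h2" using uv by (simp add: phi_cls Phi_append)
      ultimately show ?case by force
    qed
    then show "carrier (H_grp W GG I g) \<subseteq> phi ` carrier (pres_group I RL)" by (auto simp: carr_H)
  qed
  show ?thesis using hom inj sur by (simp add: iso_def bij_betw_def)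
qed

lemma phi_gen: "i \<in> I \<Longrightarrow> phi (pres_gen I RL i) = (i, g i)"
  by (simp add: pres_gen_def cls_def[symmetric] phi_cls Phi_single)

end

theorem lemma1:
  fixes V :: "'v set" and E :: "'v \<Rightarrow> 'v \<Rightarrow> bool"
    and Gs :: "('v list set \<Rightarrow> 'v list set) set"
    and I :: "'v list set set"
    and g :: "'v list set \<Rightarrow> ('v list set \<Rightarrow> 'v list set)"
  defines "W \<equiv> racg V E"
    and "S \<equiv> racg_S V E"
    and "GG \<equiv> (AutS (racg V E) (racg_S V E))\<lparr>carrier := Gs\<rparr>"
  assumes G_sub: "subgroup Gs (AutS W S)"
    and I_sub: "I \<subseteq> S"
    and g_in: "\<forall>i\<in>I. g i \<in> Gs"
    and g_invol: "\<forall>i\<in>I. g i \<otimes>\<^bsub>GG\<^esub> g i = \<one>\<^bsub>GG\<^esub> \<and> g i \<noteq> \<one>\<^bsub>GG\<^esub>"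
    and cond_i: "\<forall>i\<in>I. \<forall>s\<in>S. g i s \<in> S"
    and cond_ii: "\<forall>i\<in>I. \<forall>j\<in>I. i \<otimes>\<^bsub>W\<^esub> j = j \<otimes>\<^bsub>W\<^esub> i \<longrightarrow>
        (g i j \<in> I \<and> g j i = i \<and> g (g i j) = g i \<otimes>\<^bsub>GG\<^esub> g j \<otimes>\<^bsub>GG\<^esub> g i) \<or>
        (g j i \<in> I \<and> g i j = j \<and> g (g j i) = g j \<otimes>\<^bsub>GG\<^esub> g i \<otimes>\<^bsub>GG\<^esub> g j)"
    and cond_iii: "\<forall>i\<in>I. g i i = i"
  shows "\<exists>\<phi>. \<phi> \<in> iso (pres_group I (L_rel W GG I g)) (H_grp W GG I g) \<and>
           (\<forall>i\<in>I. \<phi> (pres_gen I (L_rel W GG I g) i) = (i, g i))"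
proof -
  have loc: "L1 V E Gs I g W S GG"
    unfolding L1_def using G_sub I_sub g_in g_invol cond_ii cond_iii
    by (intro conjI) (simp_all only: W_def S_def GG_def)
  interpret L1 V E Gs I g W S GG by (rule loc)
  show ?thesis using phi_iso phi_gen by blast
qed

end
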